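(* Let $k$ be a field, $n\ge 2$, and $d_1,\ldots,d_n$ positive integers. The algebra $A=k[x_1, \ldots, x_n]/(x_1^{d_1}, \ldots, x_n^{d_n})$ has the weak Lefschetz property if and only if multiplication by $(x_1+ \dots + x_{n-1})^{d_n}$ has maximal rank in every degree on $B=k[x_1, \ldots, x_{n-1}]/(x_1^{d_1}, \ldots, x_{n-1}^{d_{n-1}})$, i.e. for every $i$ the map $B_i\to B_{i+d_n}$, $b\mapsto (x_1+\cdots+x_{n-1})^{d_n}b$, is injective or surjective.
   Context: Algebras are graded by degree, $A=\bigoplus_{i\ge0}A_i$. A graded artinian algebra $A$ has the weak Lefschetz property if there is a linear form $\ell\in A_1$ such that for every $i$ the map $A_i\to A_{i+1}$, $a\mapsto \ell a$, is injective or surjective. *)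

theory Defs
  imports Main
begin

text \<open>Concrete model of the monomial complete intersection
  A = k[x_0,...,x_{n-1}]/(x_0^{d_0},...,x_{n-1}^{d_{n-1}}).
  Monomials are exponent vectors a :: nat => nat supported on {..<n};
  the standard monomials (those not in the ideal) are the ones with a i < d i.
  An element of A is a k-valued coefficient function on standard monomials
  (a k-linear combination of the residue classes of standard monomials, which
  form a k-basis of A).\<close>

definition box :: "nat \<Rightarrow> (nat \<Rightarrow> nat) \<Rightarrow> (nat \<Rightarrow> nat) set" where
  "box n d = {a. (\<forall>i<n. a i < d i) \<and> (\<forall>i. n \<le> i \<longrightarrow> a i = 0)}"

definition mdeg :: "nat \<Rightarrow> (nat \<Rightarrow> nat) \<Rightarrow> nat" where
  "mdeg n a = (\<Sum>i<n. a i)"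

definition graded_piece :: "nat \<Rightarrow> (nat \<Rightarrow> nat) \<Rightarrow> nat \<Rightarrow> ((nat \<Rightarrow> nat) \<Rightarrow> 'k::zero) set" where
  "graded_piece n d j = {f. \<forall>a. f a \<noteq> 0 \<longrightarrow> a \<in> box n d \<and> mdeg n a = j}"

text \<open>Multiplication in A by the linear form c_0 x_0 + ... + c_{n-1} x_{n-1}:
  the coefficient of x^m in the product is sum_i c_i * (coefficient of x^(m - e_i)),
  and monomials outside the box vanish in the quotient.\<close>
definition lin_mult :: "nat \<Rightarrow> (nat \<Rightarrow> nat) \<Rightarrow> (nat \<Rightarrow> 'k::comm_ring_1)
    \<Rightarrow> ((nat \<Rightarrow> nat) \<Rightarrow> 'k) \<Rightarrow> ((nat \<Rightarrow> nat) \<Rightarrow> 'k)" where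
  "lin_mult n d c f = (\<lambda>m. if m \<in> box n d
      then (\<Sum>i<n. if 0 < m i then c i * f (m(i := m i - 1)) else 0) else 0)"

definition has_WLP :: "'k::field itself \<Rightarrow> nat \<Rightarrow> (nat \<Rightarrow> nat) \<Rightarrow> bool" where
  "has_WLP _ n d \<longleftrightarrow> (\<exists>c :: nat \<Rightarrow> 'k. \<forall>j.
      inj_on (lin_mult n d c) (graded_piece n d j)
      \<or> lin_mult n d c ` graded_piece n d j = graded_piece n d (Suc j))"

end

theory Submission
  imports Defs
begin


lemma lin_mult_outside: "m \<notin> box n d \<Longrightarrow> lin_mult n d c f m = 0"
  by (simp add: lin_mult_def)

lemma lin_mult_nz:
  assumes h: "lin_mult n d c f m \<noteq> 0"
  shows "m \<in> box n d \<and> (\<exists>i<n. 0 < m i \<and> c i * f (m(i := m i - 1)) \<noteq> 0)"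
proof -
  from h have mb: "m \<in> box n d" by (auto simp: lin_mult_def split: if_splits)
  have "\<exists>i<n. 0 < m i \<and> c i * f (m(i := m i - 1)) \<noteq> 0"
  proof (rule ccontr)
    assume "\<not> ?thesis"
    hence "(\<Sum>i<n. if 0 < m i then c i * f (m(i := m i - 1)) else 0) = 0"
      by (intro sum.neutral) auto
    with h mb show False by (simp add: lin_mult_def)
  qed
  with mb show ?thesis by blast
qed

lemma mdeg_dec:
  assumes "i < n" "0 < m i"
  shows "mdeg n m = Suc (mdeg n (m(i := m i - 1)))"
proof -
  have f: "finite {..<n}" by simp
  have "mdeg n m = m i + (\<Sum>k\<in>{..<n}-{i}. m k)"
    unfolding mdeg_def using assms sum.remove[OF f, of i m] by simp
  moreover have "mdeg n (m(i := m i - 1)) = (m i - 1) + (\<Sum>k\<in>{..<n}-{i}. (m(i := m i - 1)) k)"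
    unfolding mdeg_def using assms sum.remove[OF f, of i "m(i := m i - 1)"] by simp
  moreover have "(\<Sum>k\<in>{..<n}-{i}. (m(i := m i - 1)) k) = (\<Sum>k\<in>{..<n}-{i}. m k)"
    by (intro sum.cong) auto
  ultimately show ?thesis using assms by simp
qed

lemma box_dec: "m \<in> box n d \<Longrightarrow> i < n \<Longrightarrow> m(i := m i - 1) \<in> box n d"
  unfolding box_def by (auto simp: less_imp_diff_less)

lemma lin_mult_graded:
  assumes "f \<in> graded_piece n d j"
  shows "lin_mult n d c f \<in> graded_piece n d (Suc j)"
  unfolding graded_piece_def
proof (intro CollectI allI impI)
  fix a assume "lin_mult n d c f a \<noteq> 0"
  from lin_mult_nz[OF this] obtain i where i: "i < n" "0 < a i" "c i * f (a(i := a i - 1)) \<noteq> 0"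
    and ab: "a \<in> box n d" by blast
  from i(3) have "f (a(i := a i - 1)) \<noteq> 0" by auto
  with assms have "mdeg n (a(i := a i - 1)) = j" by (auto simp: graded_piece_def)
  with mdeg_dec[of i n a] i ab show "a \<in> box n d \<and> mdeg n a = Suc j" by simp
qed

lemma funpow_graded:
  assumes "f \<in> graded_piece n d j"
  shows "(lin_mult n d c ^^ k) f \<in> graded_piece n d (j + k)"
  by (induction k) (auto simp: assms lin_mult_graded)

lemma lin_mult_add:
  "lin_mult n d c (\<lambda>x. f x + g x) = (\<lambda>x. lin_mult n d c f x + lin_mult n d c g x)"
  by (rule ext) (auto simp: lin_mult_def sum.distrib[symmetric] distrib_left intro!: sum.cong)

lemma lin_mult_diff:
  "lin_mult n d c (\<lambda>x. f x - g x) = (\<lambda>x. lin_mult n d c f x - lin_mult n d c g x)"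
  by (rule ext) (auto simp: lin_mult_def sum_subtractf[symmetric] right_diff_distrib intro!: sum.cong)

lemma lin_mult_smult:
  "lin_mult n d c (\<lambda>x. s * f x) = (\<lambda>x. s * lin_mult n d c f x)"
  by (rule ext) (auto simp: lin_mult_def sum_distrib_left mult.left_commute intro!: sum.cong)

lemma lin_mult_zero: "lin_mult n d (c::nat\<Rightarrow>'k::comm_ring_1) (\<lambda>_. 0) = (\<lambda>_. 0)"
  unfolding lin_mult_def by (rule ext) (simp only: mult_zero_right, simp)

lemma funpow_smult:
  "(lin_mult n d c ^^ k) (\<lambda>x. s * f x) = (\<lambda>x. s * (lin_mult n d c ^^ k) f x)"
  by (induction k) (auto simp: lin_mult_smult)

lemma funpow_diff:
  "(lin_mult n d c ^^ k) (\<lambda>x. f x - g x) = (\<lambda>x. (lin_mult n d c ^^ k) f x - (lin_mult n d c ^^ k) g x)"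
  by (induction k) (auto simp: lin_mult_diff)

lemma funpow_zero: "(lin_mult n d c ^^ k) (\<lambda>_. 0) = (\<lambda>_. 0)"
  by (induction k) (auto simp: lin_mult_zero)

lemma funpow_outside: "m \<notin> box n d \<Longrightarrow> 0 < k \<Longrightarrow> (lin_mult n d c ^^ k) f m = 0"
  by (cases k) (auto simp: lin_mult_outside)

lemma nz_diff: "(x::'a::ab_group_add) - y \<noteq> 0 \<Longrightarrow> x \<noteq> 0 \<or> y \<noteq> 0" by auto
lemma nz_add: "(x::'a::ab_group_add) + y \<noteq> 0 \<Longrightarrow> x \<noteq> 0 \<or> y \<noteq> 0" by auto
lemma nz_mult: "(s::'a::mult_zero) * x \<noteq> 0 \<Longrightarrow> x \<noteq> 0" by auto

lemma gp_diff: "(f::(nat\<Rightarrow>nat)\<Rightarrow>'k::comm_ring_1) \<in> graded_piece n d j \<Longrightarrow> g \<in> graded_piece n d j \<Longrightarrow> (\<lambda>x. f x - g x) \<in> graded_piece n d j"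
  unfolding graded_piece_def
proof (intro CollectI allI impI)
  fix a assume a: "f a - g a \<noteq> 0"
  assume "f \<in> {f. \<forall>a. f a \<noteq> 0 \<longrightarrow> a \<in> box n d \<and> mdeg n a = j}" "g \<in> {f. \<forall>a. f a \<noteq> 0 \<longrightarrow> a \<in> box n d \<and> mdeg n a = j}"
  moreover from a have "f a \<noteq> 0 \<or> g a \<noteq> 0" by auto
  ultimately show "a \<in> box n d \<and> mdeg n a = j" by blast
qed

lemma gp_add: "(f::(nat\<Rightarrow>nat)\<Rightarrow>'k::comm_ring_1) \<in> graded_piece n d j \<Longrightarrow> g \<in> graded_piece n d j \<Longrightarrow> (\<lambda>x. f x + g x) \<in> graded_piece n d j"
  unfolding graded_piece_def
proof (intro CollectI allI impI)
  fix a assume a: "f a + g a \<noteq> 0"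
  assume "f \<in> {f. \<forall>a. f a \<noteq> 0 \<longrightarrow> a \<in> box n d \<and> mdeg n a = j}" "g \<in> {f. \<forall>a. f a \<noteq> 0 \<longrightarrow> a \<in> box n d \<and> mdeg n a = j}"
  moreover from a have "f a \<noteq> 0 \<or> g a \<noteq> 0" by auto
  ultimately show "a \<in> box n d \<and> mdeg n a = j" by blast
qed

lemma gp_smult: "(f::(nat\<Rightarrow>nat)\<Rightarrow>'k::comm_ring_1) \<in> graded_piece n d j \<Longrightarrow> (\<lambda>x. s * f x) \<in> graded_piece n d j"
  unfolding graded_piece_def
proof (intro CollectI allI impI)
  fix a assume a: "s * f a \<noteq> 0"
  assume "f \<in> {f. \<forall>a. f a \<noteq> 0 \<longrightarrow> a \<in> box n d \<and> mdeg n a = j}"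
  moreover from a have "f a \<noteq> 0" by auto
  ultimately show "a \<in> box n d \<and> mdeg n a = j" by blast
qed

lemma gp_zero: "(\<lambda>_. 0) \<in> graded_piece n d j"
  unfolding graded_piece_def by auto

lemma inj_kernel:
  fixes F :: "('a \<Rightarrow> 'k::ab_group_add) \<Rightarrow> ('b \<Rightarrow> 'k)"
  assumes "\<And>f. f \<in> G \<Longrightarrow> F f = (\<lambda>_. 0) \<Longrightarrow> f = (\<lambda>_. 0)"
    and "\<And>f g. f \<in> G \<Longrightarrow> g \<in> G \<Longrightarrow> (\<lambda>x. f x - g x) \<in> G"
    and "\<And>f g. F (\<lambda>x. f x - g x) = (\<lambda>x. F f x - F g x)"
  shows "inj_on F G"
proof (rule inj_onI)
  fix f g assume fg: "f \<in> G" "g \<in> G" "F f = F g"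
  have "F (\<lambda>x. f x - g x) = (\<lambda>_. 0)" using fg(3) assms(3) by simp
  hence "(\<lambda>x. f x - g x) = (\<lambda>_. 0)" using assms(1,2) fg by blast
  thus "f = g" by (metis eq_iff_diff_eq_0 ext)
qed


section \<open>Scaling\<close>

lemma scale_prod:
  fixes c :: "nat \<Rightarrow> 'k::comm_ring_1"
  assumes "i < n" "0 < m i"
  shows "c i * (\<Prod>k<n. c k ^ (m(i := m i - 1)) k) = (\<Prod>k<n. c k ^ m k)"
proof -
  have f: "finite {..<n}" and i: "i \<in> {..<n}" using assms by auto
  have A: "(\<Prod>k<n. c k ^ m k) = c i ^ m i * (\<Prod>k\<in>{..<n}-{i}. c k ^ m k)"
    by (rule prod.remove[OF f i])
  have B: "(\<Prod>k<n. c k ^ (m(i := m i - 1)) k) = c i ^ (m(i := m i - 1)) i * (\<Prod>k\<in>{..<n}-{i}. c k ^ (m(i := m i - 1)) k)"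
    by (rule prod.remove[OF f i])
  have C: "(\<Prod>k\<in>{..<n}-{i}. c k ^ (m(i := m i - 1)) k) = (\<Prod>k\<in>{..<n}-{i}. c k ^ m k)"
    by (intro prod.cong) auto
  have D: "c i * c i ^ (m i - 1) = c i ^ m i"
    using assms(2) power_Suc[of "c i" "m i - 1"] by simp
  show ?thesis unfolding A B C using D by (simp add: mult.assoc[symmetric])
qed

lemma lin_mult_scale:
  fixes c :: "nat \<Rightarrow> 'k::comm_ring_1"
  shows "lin_mult n d c (\<lambda>m. (\<Prod>k<n. c k ^ m k) * h m)
       = (\<lambda>m. (\<Prod>k<n. c k ^ m k) * lin_mult n d (\<lambda>_. 1) h m)"
proof (rule ext)
  fix m
  show "lin_mult n d c (\<lambda>m. (\<Prod>k<n. c k ^ m k) * h m) m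
       = (\<Prod>k<n. c k ^ m k) * lin_mult n d (\<lambda>_. 1) h m"
  proof (cases "m \<in> box n d")
    case True
    have "lin_mult n d c (\<lambda>m. (\<Prod>k<n. c k ^ m k) * h m) m
        = (\<Sum>i<n. if 0 < m i then c i * ((\<Prod>k<n. c k ^ (m(i := m i - 1)) k) * h (m(i := m i - 1))) else 0)"
      using True by (simp add: lin_mult_def)
    also have "\<dots> = (\<Sum>i<n. (\<Prod>k<n. c k ^ m k) * (if 0 < m i then 1 * h (m(i := m i - 1)) else 0))"
    proof (rule sum.cong)
      fix i assume "i \<in> {..<n}"
      thus "(if 0 < m i then c i * ((\<Prod>k<n. c k ^ (m(i := m i - 1)) k) * h (m(i := m i - 1))) else 0)
          = (\<Prod>k<n. c k ^ m k) * (if 0 < m i then 1 * h (m(i := m i - 1)) else 0)"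
      proof (cases "0 < m i")
        case True
        have "c i * ((\<Prod>k<n. c k ^ (m(i := m i - 1)) k) * h (m(i := m i - 1)))
            = (c i * (\<Prod>k<n. c k ^ (m(i := m i - 1)) k)) * h (m(i := m i - 1))"
          by (rule mult.assoc[symmetric])
        also have "\<dots> = (\<Prod>k<n. c k ^ m k) * h (m(i := m i - 1))"
          using scale_prod[of i n m c] True \<open>i \<in> {..<n}\<close> by simp
        finally show ?thesis using True by simp
      qed simp
    qed simp
    also have "\<dots> = (\<Prod>k<n. c k ^ m k) * (\<Sum>i<n. (if 0 < m i then 1 * h (m(i := m i - 1)) else 0))"
      by (rule sum_distrib_left[symmetric])
    also have "\<dots> = (\<Prod>k<n. c k ^ m k) * lin_mult n d (\<lambda>_. 1) h m"
      using True by (simp only: lin_mult_def if_True)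
    finally show ?thesis .
  qed (simp add: lin_mult_def)
qed

lemma gp_pointwise:
  assumes "h \<in> graded_piece n d k" "\<And>m. h m = 0 \<Longrightarrow> g m = 0"
  shows "g \<in> graded_piece n d k"
proof -
  have "\<forall>a. g a \<noteq> 0 \<longrightarrow> a \<in> box n d \<and> mdeg n a = k"
  proof (intro allI impI)
    fix a assume "g a \<noteq> 0" hence "h a \<noteq> 0" using assms(2) by blast
    thus "a \<in> box n d \<and> mdeg n a = k" using assms(1) by (simp add: graded_piece_def)
  qed
  thus ?thesis by (simp add: graded_piece_def)
qed

lemma wlp_scale:
  fixes c :: "nat \<Rightarrow> 'k::field"
  assumes nz: "\<forall>i<n. c i \<noteq> 0"
    and w: "inj_on (lin_mult n d c) (graded_piece n d j)
      \<or> lin_mult n d c ` graded_piece n d j = graded_piece n d (Suc j)"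
  shows "inj_on (lin_mult n d (\<lambda>_. 1::'k)) (graded_piece n d j)
      \<or> lin_mult n d (\<lambda>_. 1::'k) ` graded_piece n d j = graded_piece n d (Suc j)"
proof -
  define P where "P = (\<lambda>m. \<Prod>k<n. c k ^ m k)"
  have Pnz: "P m \<noteq> 0" for m
  proof -
    have "\<forall>k\<in>{..<n}. c k ^ m k \<noteq> 0" using nz by simp
    thus ?thesis unfolding P_def by (subst prod_zero_iff) auto
  qed
  have sc: "lin_mult n d c (\<lambda>m. P m * h m) = (\<lambda>m. P m * lin_mult n d (\<lambda>_. 1::'k) h m)" for h
    unfolding P_def by (rule lin_mult_scale)
  have gpP: "(\<lambda>m. P m * h m) \<in> graded_piece n d k" if "h \<in> graded_piece n d k" for h k
    using that by (rule gp_pointwise) simp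
  have gpP': "(\<lambda>m. h m / P m) \<in> graded_piece n d k" if "h \<in> graded_piece n d k" for h k
    using that by (rule gp_pointwise) simp
  from w show ?thesis
  proof
    assume inj: "inj_on (lin_mult n d c) (graded_piece n d j)"
    have "inj_on (lin_mult n d (\<lambda>_. 1::'k)) (graded_piece n d j)"
    proof (rule inj_onI)
      fix f g :: "(nat \<Rightarrow> nat) \<Rightarrow> 'k" assume fg: "f \<in> graded_piece n d j" "g \<in> graded_piece n d j"
        "lin_mult n d (\<lambda>_. 1::'k) f = lin_mult n d (\<lambda>_. 1::'k) g"
      have "lin_mult n d c (\<lambda>m. P m * f m) = lin_mult n d c (\<lambda>m. P m * g m)"
        by (simp only: sc fg(3))
      hence "(\<lambda>m. P m * f m) = (\<lambda>m. P m * g m)"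
        by (rule inj_onD[OF inj _ gpP[OF fg(1)] gpP[OF fg(2)]])
      thus "f = g" using Pnz by (simp add: fun_eq_iff)
    qed
    thus ?thesis ..
  next
    assume surj: "lin_mult n d c ` graded_piece n d j = graded_piece n d (Suc j)"
    have "lin_mult n d (\<lambda>_. 1::'k) ` graded_piece n d j = graded_piece n d (Suc j)"
    proof
      show "lin_mult n d (\<lambda>_. 1::'k) ` graded_piece n d j \<subseteq> graded_piece n d (Suc j)"
        using lin_mult_graded by blast
    next
      show "graded_piece n d (Suc j) \<subseteq> lin_mult n d (\<lambda>_. 1::'k) ` graded_piece n d j"
      proof
        fix u :: "(nat \<Rightarrow> nat) \<Rightarrow> 'k" assume u: "u \<in> graded_piece n d (Suc j)"
        have "(\<lambda>m. P m * u m) \<in> lin_mult n d c ` graded_piece n d j" by (subst surj) (rule gpP[OF u])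
        then obtain g where g: "g \<in> graded_piece n d j" "lin_mult n d c g = (\<lambda>m. P m * u m)"
          by (auto elim!: imageE)
        define h where "h = (\<lambda>m. g m / P m)"
        have gh: "g = (\<lambda>m. P m * h m)" unfolding h_def using Pnz by (simp add: fun_eq_iff)
        have "(\<lambda>m. P m * lin_mult n d (\<lambda>_. 1::'k) h m) = lin_mult n d c (\<lambda>m. P m * h m)"
          by (rule sc[symmetric])
        also have "\<dots> = lin_mult n d c g" by (simp only: gh)
        also have "\<dots> = (\<lambda>m. P m * u m)" by (rule g(2))
        finally have "(\<lambda>m. P m * lin_mult n d (\<lambda>_. 1::'k) h m) = (\<lambda>m. P m * u m)" .
        hence "lin_mult n d (\<lambda>_. 1::'k) h = u" using Pnz by (simp add: fun_eq_iff)
        moreover have "h \<in> graded_piece n d j" unfolding h_def using gpP' g(1) by blast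
        ultimately show "u \<in> lin_mult n d (\<lambda>_. 1::'k) ` graded_piece n d j" by blast
      qed
    qed
    thus ?thesis ..
  qed
qed


definition wt :: "nat \<Rightarrow> (nat \<Rightarrow> 'k::zero) \<Rightarrow> (nat \<Rightarrow> nat) \<Rightarrow> nat" where
  "wt n c m = (\<Sum>i<n. if c i = 0 then m i else 0)"

lemma wt_dec0:
  assumes "i < n" "0 < m i" "c i = 0"
  shows "wt n c m = Suc (wt n c (m(i := m i - 1)))"
proof -
  have f: "finite {..<n}" and ii: "i \<in> {..<n}" using assms by auto
  have A: "wt n c m = (if c i = 0 then m i else 0) + (\<Sum>k\<in>{..<n}-{i}. if c k = 0 then m k else 0)"
    unfolding wt_def by (rule sum.remove[OF f ii])
  have B: "wt n c (m(i := m i - 1)) = (if c i = 0 then (m(i := m i - 1)) i else 0)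
       + (\<Sum>k\<in>{..<n}-{i}. if c k = 0 then (m(i := m i - 1)) k else 0)"
    unfolding wt_def by (rule sum.remove[OF f ii])
  have C: "(\<Sum>k\<in>{..<n}-{i}. if c k = 0 then (m(i := m i - 1)) k else 0)
      = (\<Sum>k\<in>{..<n}-{i}. if c k = 0 then m k else 0)"
    by (intro sum.cong) auto
  show ?thesis unfolding A B C using assms by simp
qed

lemma wt_dec1: "c i \<noteq> 0 \<Longrightarrow> wt n c (m(i := v)) = wt n c m"
  unfolding wt_def by (intro sum.cong) auto

lemma wt_le: "wt n c m \<le> mdeg n m"
  unfolding wt_def mdeg_def by (intro sum_mono) auto

definition restr :: "nat \<Rightarrow> (nat \<Rightarrow> 'k::zero) \<Rightarrow> nat \<Rightarrow> ((nat \<Rightarrow> nat) \<Rightarrow> 'k) \<Rightarrow> ((nat \<Rightarrow> nat) \<Rightarrow> 'k)" where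
  "restr n c E h = (\<lambda>m. if wt n c m = E then h m else 0)"

lemma restr_commute:
  fixes c :: "nat \<Rightarrow> 'k::comm_ring_1"
  shows "lin_mult n d c (restr n c E h) = restr n c E (lin_mult n d c h)"
proof (rule ext)
  fix m
  have T: "(if 0 < m i then c i * restr n c E h (m(i := m i - 1)) else 0)
      = (if wt n c m = E then (if 0 < m i then c i * h (m(i := m i - 1)) else 0) else 0)" for i
  proof (cases "c i = 0")
    case True thus ?thesis by simp
  next
    case False
    hence "wt n c (m(i := m i - 1)) = wt n c m" by (rule wt_dec1)
    thus ?thesis unfolding restr_def by simp
  qed
  have "(\<Sum>i<n. if 0 < m i then c i * restr n c E h (m(i := m i - 1)) else 0)
      = (\<Sum>i<n. if wt n c m = E then (if 0 < m i then c i * h (m(i := m i - 1)) else 0) else 0)"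
    using T by (intro sum.cong) auto
  also have "\<dots> = (if wt n c m = E then (\<Sum>i<n. if 0 < m i then c i * h (m(i := m i - 1)) else 0) else 0)"
    by simp
  finally show "lin_mult n d c (restr n c E h) m = restr n c E (lin_mult n d c h) m"
    unfolding lin_mult_def restr_def by simp
qed

lemma restr_gp:
  assumes "h \<in> graded_piece n d j" shows "restr n c E h \<in> graded_piece n d j"
proof (rule gp_pointwise[OF assms])
  fix m assume "h m = 0" thus "restr n c E h m = 0" by (simp add: restr_def)
qed

lemma restr_restr: "restr n c E (restr n c E h) = restr n c E h"
  unfolding restr_def by auto

definition ccof :: "(nat \<Rightarrow> 'k::comm_ring_1) \<Rightarrow> nat \<Rightarrow> 'k" where
  "ccof c = (\<lambda>i. if c i = 0 then 1 else c i)"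

definition nzc :: "(nat \<Rightarrow> 'k::comm_ring_1) \<Rightarrow> nat \<Rightarrow> 'k" where
  "nzc c = (\<lambda>i. if c i = 0 then 1 else 0)"

lemma split_cc:
  fixes c :: "nat \<Rightarrow> 'k::comm_ring_1"
  shows "lin_mult n d (ccof c) h m = lin_mult n d c h m + lin_mult n d (nzc c) h m"
proof (cases "m \<in> box n d")
  case True
  have "(\<Sum>i<n. if 0 < m i then ccof c i * h (m(i := m i - 1)) else 0)
     = (\<Sum>i<n. (if 0 < m i then c i * h (m(i := m i - 1)) else 0) + (if 0 < m i then nzc c i * h (m(i := m i - 1)) else 0))"
    by (intro sum.cong) (auto simp: ccof_def nzc_def)
  also have "\<dots> = (\<Sum>i<n. if 0 < m i then c i * h (m(i := m i - 1)) else 0) + (\<Sum>i<n. if 0 < m i then nzc c i * h (m(i := m i - 1)) else 0)"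
    by (rule sum.distrib)
  finally show ?thesis using True unfolding lin_mult_def by simp
qed (simp add: lin_mult_def)

lemma nz_support:
  fixes c :: "nat \<Rightarrow> 'k::comm_ring_1"
  assumes "lin_mult n d (nzc c) h m \<noteq> 0"
  shows "\<exists>m'. h m' \<noteq> 0 \<and> wt n c m = Suc (wt n c m')"
proof -
  from lin_mult_nz[OF assms] obtain i where i: "i < n" "0 < m i" "nzc c i * h (m(i := m i - 1)) \<noteq> 0"
    by blast
  hence ci: "c i = 0" and hi: "h (m(i := m i - 1)) \<noteq> 0" by (auto simp: nzc_def split: if_splits)
  from wt_dec0[of i n m c] i(1,2) ci hi show ?thesis by blast
qed

lemma deg_inj:
  fixes c :: "nat \<Rightarrow> 'k::comm_ring_1"
  assumes inj: "inj_on (lin_mult n d c) (graded_piece n d j)"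
  shows "inj_on (lin_mult n d (ccof c)) (graded_piece n d j)"
proof (rule inj_kernel)
  show "(\<lambda>x. f x - g x) \<in> graded_piece n d j" if "f \<in> graded_piece n d j" "g \<in> graded_piece n d j" for f g :: "(nat \<Rightarrow> nat) \<Rightarrow> 'k"
    using that by (rule gp_diff)
  show "lin_mult n d (ccof c) (\<lambda>x. f x - g x) = (\<lambda>x. lin_mult n d (ccof c) f x - lin_mult n d (ccof c) g x)" for f g
    by (rule lin_mult_diff)
  fix h :: "(nat \<Rightarrow> nat) \<Rightarrow> 'k"
  assume hG: "h \<in> graded_piece n d j" and hk: "lin_mult n d (ccof c) h = (\<lambda>_. 0)"
  show "h = (\<lambda>_. 0)"
  proof (rule ccontr)
    assume "h \<noteq> (\<lambda>_. 0)"
    then obtain m0 where "h m0 \<noteq> 0" by auto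
    hence ex: "\<exists>E m. h m \<noteq> 0 \<and> wt n c m = E" by blast
    define e0 where "e0 = (LEAST E. \<exists>m. h m \<noteq> 0 \<and> wt n c m = E)"
    have ex0: "\<exists>m. h m \<noteq> 0 \<and> wt n c m = e0"
      unfolding e0_def using ex by (rule LeastI_ex)
    have low: "e0 \<le> wt n c m" if "h m \<noteq> 0" for m
      unfolding e0_def using that by (intro Least_le) blast
    define w where "w = restr n c e0 h"
    have wG: "w \<in> graded_piece n d j" unfolding w_def using hG by (rule restr_gp)
    have "lin_mult n d c w = (\<lambda>_. 0)"
    proof (rule ext)
      fix m
      have "lin_mult n d c w m = restr n c e0 (lin_mult n d c h) m"
        unfolding w_def restr_commute by simp
      also have "\<dots> = 0"
      proof (cases "wt n c m = e0")
        case True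
        have N0: "lin_mult n d (nzc c) h m = 0"
        proof (rule ccontr)
          assume "lin_mult n d (nzc c) h m \<noteq> 0"
          from nz_support[OF this] obtain m' where "h m' \<noteq> 0" "wt n c m = Suc (wt n c m')" by blast
          with low[of m'] True show False by simp
        qed
        have "lin_mult n d (ccof c) h m = 0" using hk by simp
        with split_cc[of n d c h m] N0 have "lin_mult n d c h m = 0" by simp
        thus ?thesis unfolding restr_def by simp
      qed (simp add: restr_def)
      finally show "lin_mult n d c w m = 0" .
    qed
    hence "lin_mult n d c w = lin_mult n d c (\<lambda>_. 0)" by (simp add: lin_mult_zero)
    hence "w = (\<lambda>_. 0)" by (rule inj_onD[OF inj _ wG gp_zero])
    moreover from ex0 obtain m where "h m \<noteq> 0" "wt n c m = e0" by blast
    hence "w m \<noteq> 0" unfolding w_def restr_def by simp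
    ultimately show False by simp
  qed
qed

lemma deg_surj:
  fixes c :: "nat \<Rightarrow> 'k::comm_ring_1"
  assumes surj: "lin_mult n d c ` graded_piece n d j = graded_piece n d (Suc j)"
  shows "lin_mult n d (ccof c) ` graded_piece n d j = graded_piece n d (Suc j)"
proof
  show "lin_mult n d (ccof c) ` graded_piece n d j \<subseteq> graded_piece n d (Suc j)"
    using lin_mult_graded by blast
next
  have claim: "\<forall>u :: (nat \<Rightarrow> nat) \<Rightarrow> 'k. u \<in> graded_piece n d (Suc j) \<longrightarrow>
      (\<forall>m. u m \<noteq> 0 \<longrightarrow> Suc (Suc j) \<le> wt n c m + K) \<longrightarrow> u \<in> lin_mult n d (ccof c) ` graded_piece n d j" for K
  proof (induction K)
    case 0
    show ?case
    proof (intro allI impI)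
      fix u :: "(nat \<Rightarrow> nat) \<Rightarrow> 'k"
      assume uG: "u \<in> graded_piece n d (Suc j)" and us: "\<forall>m. u m \<noteq> 0 \<longrightarrow> Suc (Suc j) \<le> wt n c m + 0"
      have "u = (\<lambda>_. 0)"
      proof (rule ext, rule ccontr)
        fix m assume "u m \<noteq> 0"
        with uG have "mdeg n m = Suc j" by (simp add: graded_piece_def)
        moreover from us \<open>u m \<noteq> 0\<close> have "Suc (Suc j) \<le> wt n c m" by simp
        ultimately show False using wt_le[of n c m] by simp
      qed
      moreover have "(\<lambda>_. 0) = lin_mult n d (ccof c) (\<lambda>_. 0)" by (simp add: lin_mult_zero)
      ultimately show "u \<in> lin_mult n d (ccof c) ` graded_piece n d j"
        using gp_zero by (metis image_eqI)
    qed
  next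
    case (Suc K)
    show ?case
    proof (intro allI impI)
      fix u :: "(nat \<Rightarrow> nat) \<Rightarrow> 'k"
      assume uG: "u \<in> graded_piece n d (Suc j)" and us: "\<forall>m. u m \<noteq> 0 \<longrightarrow> Suc (Suc j) \<le> wt n c m + Suc K"
      define E where "E = Suc (Suc j) - Suc K"
      have uE: "restr n c E u \<in> graded_piece n d (Suc j)" using uG by (rule restr_gp)
      hence "restr n c E u \<in> lin_mult n d c ` graded_piece n d j" by (subst surj)
      then obtain w where wG: "w \<in> graded_piece n d j" and wu: "lin_mult n d c w = restr n c E u"
        by (auto elim!: imageE)
      define wE where "wE = restr n c E w"
      have wEG: "wE \<in> graded_piece n d j" unfolding wE_def using wG by (rule restr_gp)
      have LwE: "lin_mult n d c wE = restr n c E u"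
        unfolding wE_def restr_commute wu restr_restr ..
      define u' where "u' = (\<lambda>m. u m - lin_mult n d (ccof c) wE m)"
      have u'G: "u' \<in> graded_piece n d (Suc j)"
        unfolding u'_def using uG lin_mult_graded[OF wEG] by (rule gp_diff)
      have u's: "\<forall>m. u' m \<noteq> 0 \<longrightarrow> Suc (Suc j) \<le> wt n c m + K"
      proof (intro allI impI)
        fix m assume nz: "u' m \<noteq> 0"
        have eq: "u' m = u m - restr n c E u m - lin_mult n d (nzc c) wE m"
          unfolding u'_def split_cc LwE by (simp add: algebra_simps)
        have Nsup: "wt n c m = Suc E" if "lin_mult n d (nzc c) wE m \<noteq> 0"
        proof -
          from nz_support[OF that] obtain m' where "wE m' \<noteq> 0" "wt n c m = Suc (wt n c m')" by blast
          thus ?thesis unfolding wE_def restr_def by (simp split: if_splits)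
        qed
        show "Suc (Suc j) \<le> wt n c m + K"
        proof (cases "wt n c m = E")
          case True
          hence "u' m = - lin_mult n d (nzc c) wE m" using eq by (simp add: restr_def)
          with nz have "lin_mult n d (nzc c) wE m \<noteq> 0" by simp
          from Nsup[OF this] True show ?thesis by simp
        next
          case False
          hence "u' m = u m - lin_mult n d (nzc c) wE m" using eq by (simp add: restr_def)
          with nz have "u m \<noteq> 0 \<or> lin_mult n d (nzc c) wE m \<noteq> 0" by auto
          thus ?thesis
          proof
            assume "u m \<noteq> 0"
            with us have "Suc (Suc j) \<le> wt n c m + Suc K" by blast
            with False show ?thesis unfolding E_def by linarith
          next
            assume "lin_mult n d (nzc c) wE m \<noteq> 0"
            from Nsup[OF this] show ?thesis unfolding E_def by linarith
          qed
        qed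
      qed
      from Suc.IH u'G u's have "u' \<in> lin_mult n d (ccof c) ` graded_piece n d j" by blast
      then obtain x where xG: "x \<in> graded_piece n d j" and xu: "u' = lin_mult n d (ccof c) x"
        by (auto elim!: imageE)
      have "u = (\<lambda>m. u' m + lin_mult n d (ccof c) wE m)" unfolding u'_def by simp
      also have "\<dots> = lin_mult n d (ccof c) (\<lambda>m. x m + wE m)" unfolding xu lin_mult_add ..
      finally have "u = lin_mult n d (ccof c) (\<lambda>m. x m + wE m)" .
      moreover have "(\<lambda>m. x m + wE m) \<in> graded_piece n d j" using xG wEG by (rule gp_add)
      ultimately show "u \<in> lin_mult n d (ccof c) ` graded_piece n d j" by blast
    qed
  qed
  show "graded_piece n d (Suc j) \<subseteq> lin_mult n d (ccof c) ` graded_piece n d j"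
  proof
    fix u :: "(nat \<Rightarrow> nat) \<Rightarrow> 'k" assume "u \<in> graded_piece n d (Suc j)"
    with claim[of "Suc (Suc j)"] show "u \<in> lin_mult n d (ccof c) ` graded_piece n d j" by simp
  qed
qed

lemma wlp_to_one:
  assumes "has_WLP TYPE('k::field) n d"
  shows "inj_on (lin_mult n d (\<lambda>_. 1::'k)) (graded_piece n d j)
      \<or> lin_mult n d (\<lambda>_. 1::'k) ` graded_piece n d j = graded_piece n d (Suc j)"
proof -
  from assms obtain c :: "nat \<Rightarrow> 'k" where c: "\<forall>j. inj_on (lin_mult n d c) (graded_piece n d j)
      \<or> lin_mult n d c ` graded_piece n d j = graded_piece n d (Suc j)"
    unfolding has_WLP_def by blast
  have "inj_on (lin_mult n d (ccof c)) (graded_piece n d j)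
      \<or> lin_mult n d (ccof c) ` graded_piece n d j = graded_piece n d (Suc j)"
    using c deg_inj deg_surj by blast
  moreover have "\<forall>i<n. ccof c i \<noteq> 0" by (simp add: ccof_def)
  ultimately show ?thesis using wlp_scale by blast
qed


abbreviation LB :: "nat \<Rightarrow> (nat \<Rightarrow> nat) \<Rightarrow> ((nat \<Rightarrow> nat) \<Rightarrow> 'k::comm_ring_1) \<Rightarrow> ((nat \<Rightarrow> nat) \<Rightarrow> 'k)"
  where "LB N d \<equiv> lin_mult N d (\<lambda>_. 1)"

definition Pt :: "nat \<Rightarrow> (nat \<Rightarrow> nat) \<Rightarrow> nat \<Rightarrow> ((nat \<Rightarrow> nat) \<Rightarrow> 'k::zero) \<Rightarrow> ((nat \<Rightarrow> nat) \<Rightarrow> 'k)" where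
  "Pt N d t f = (\<lambda>b. if b \<in> box N d then f (b(N := t)) else 0)"

lemma box_N0: "b \<in> box N d \<Longrightarrow> b N = 0"
  by (simp add: box_def)

lemma box_lift: "b \<in> box N d \<Longrightarrow> t < d N \<Longrightarrow> b(N := t) \<in> box (Suc N) d"
  unfolding box_def by (auto simp: less_Suc_eq)

lemma box_drop: "m \<in> box (Suc N) d \<Longrightarrow> m(N := 0) \<in> box N d \<and> m N < d N"
  unfolding box_def by auto

lemma box_sub: "b \<in> box N d \<Longrightarrow> 0 < d N \<Longrightarrow> b \<in> box (Suc N) d"
  unfolding box_def by (auto simp: less_Suc_eq)

lemma box_dec': "b \<in> box N d \<Longrightarrow> b(N := t) \<in> box N d \<Longrightarrow> t = 0"
  unfolding box_def by auto

lemma mdeg_lift: "mdeg (Suc N) (b(N := t)) = mdeg N b + t"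
proof -
  have "(\<Sum>i<N. (b(N := t)) i) = (\<Sum>i<N. b i)" by (intro sum.cong) auto
  thus ?thesis unfolding mdeg_def by simp
qed

lemma mdeg_sub: "b \<in> box N d \<Longrightarrow> mdeg (Suc N) b = mdeg N b"
  using mdeg_lift[of N b 0] box_N0[of b N d] by (simp add: fun_upd_idem)

lemma upd_re: "(m(N := 0))(N := m N) = m"
  by simp

lemma key:
  fixes f :: "(nat \<Rightarrow> nat) \<Rightarrow> 'k::comm_ring_1"
  assumes b: "b \<in> box N d" and t: "t < d N"
  shows "lin_mult (Suc N) d (\<lambda>_. 1) f (b(N := t))
       = LB N d (Pt N d t f) b + (if 0 < t then Pt N d (t - 1) f b else 0)"
proof -
  have inb: "b(N := t) \<in> box (Suc N) d" using b t by (rule box_lift)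
  have T: "(if 0 < (b(N := t)) i then 1 * f ((b(N := t))(i := (b(N := t)) i - 1)) else 0)
        = (if 0 < b i then 1 * Pt N d t f (b(i := b i - 1)) else 0)" if "i < N" for i
  proof -
    have ne: "i \<noteq> N" using that by simp
    have "b(i := b i - 1) \<in> box N d" using b that by (rule box_dec)
    hence "Pt N d t f (b(i := b i - 1)) = f ((b(i := b i - 1))(N := t))" by (simp add: Pt_def)
    also have "(b(i := b i - 1))(N := t) = (b(N := t))(i := b i - 1)" using ne by (rule fun_upd_twist)
    finally have eq: "Pt N d t f (b(i := b i - 1)) = f ((b(N := t))(i := b i - 1))" .
    have bi: "(b(N := t)) i = b i" using ne by simp
    show ?thesis unfolding bi eq by (rule refl)
  qed
  have "lin_mult (Suc N) d (\<lambda>_. 1) f (b(N := t))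
      = (\<Sum>i<Suc N. if 0 < (b(N := t)) i then 1 * f ((b(N := t))(i := (b(N := t)) i - 1)) else 0)"
    using inb by (simp add: lin_mult_def)
  also have "\<dots> = (\<Sum>i<N. if 0 < (b(N := t)) i then 1 * f ((b(N := t))(i := (b(N := t)) i - 1)) else 0)
      + (if 0 < t then f (b(N := t - 1)) else 0)"
    by simp
  also have "(\<Sum>i<N. if 0 < (b(N := t)) i then 1 * f ((b(N := t))(i := (b(N := t)) i - 1)) else 0)
      = (\<Sum>i<N. if 0 < b i then 1 * Pt N d t f (b(i := b i - 1)) else 0)"
    using T by (intro sum.cong) auto
  also have "\<dots> = LB N d (Pt N d t f) b" using b by (simp add: lin_mult_def)
  also have "(if 0 < t then f (b(N := t - 1)) else 0) = (if 0 < t then Pt N d (t - 1) f b else 0)"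
    using b by (simp add: Pt_def)
  finally show ?thesis .
qed

lemma Pt_outside: "b \<notin> box N d \<Longrightarrow> Pt N d t f b = 0"
  by (simp add: Pt_def)

lemma Pt_gp:
  assumes "f \<in> graded_piece (Suc N) d j" "t \<le> j"
  shows "Pt N d t f \<in> graded_piece N d (j - t)"
  unfolding graded_piece_def
proof (intro CollectI allI impI)
  fix b assume "Pt N d t f b \<noteq> 0"
  hence bb: "b \<in> box N d" and "f (b(N := t)) \<noteq> 0" by (auto simp: Pt_def split: if_splits)
  with assms(1) have "mdeg (Suc N) (b(N := t)) = j" by (simp add: graded_piece_def)
  with mdeg_lift[of N b t] assms(2) bb show "b \<in> box N d \<and> mdeg N b = j - t" by simp
qed

lemma Pt_zero:
  assumes "f \<in> graded_piece (Suc N) d j" "j < t"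
  shows "Pt N d t f = (\<lambda>_. 0)"
proof (rule ext, rule ccontr)
  fix b assume "Pt N d t f b \<noteq> 0"
  hence bb: "b \<in> box N d" and "f (b(N := t)) \<noteq> 0" by (auto simp: Pt_def split: if_splits)
  with assms(1) have "mdeg (Suc N) (b(N := t)) = j" by (simp add: graded_piece_def)
  with mdeg_lift[of N b t] assms(2) show False by simp
qed

lemma pt_rec:
  fixes f :: "(nat \<Rightarrow> nat) \<Rightarrow> 'k::comm_ring_1"
  assumes Lf: "lin_mult (Suc N) d (\<lambda>_. 1) f = u" and t: "0 < t" "t < d N"
    and u0: "Pt N d t u = (\<lambda>_. 0)"
  shows "Pt N d (t - 1) f = (\<lambda>b. - LB N d (Pt N d t f) b)"
proof (rule ext)
  fix b
  show "Pt N d (t - 1) f b = - LB N d (Pt N d t f) b"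
  proof (cases "b \<in> box N d")
    case True
    have "u (b(N := t)) = 0" using u0 True by (metis Pt_def)
    with key[OF True t(2), of f] Lf t(1) show ?thesis by (simp add: eq_neg_iff_add_eq_0 add.commute)
  next
    case False thus ?thesis by (simp add: Pt_def lin_mult_def)
  qed
qed

lemma pt_base:
  fixes f :: "(nat \<Rightarrow> nat) \<Rightarrow> 'k::comm_ring_1"
  assumes Lf: "lin_mult (Suc N) d (\<lambda>_. 1) f = u" and D: "0 < d N"
  shows "LB N d (Pt N d 0 f) = Pt N d 0 u"
proof (rule ext)
  fix b
  show "LB N d (Pt N d 0 f) b = Pt N d 0 u b"
  proof (cases "b \<in> box N d")
    case True
    with key[OF True D, of f] Lf show ?thesis by (simp add: Pt_def)
  next
    case False thus ?thesis by (simp add: Pt_def lin_mult_def)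
  qed
qed

lemma R_lemma:
  fixes f :: "(nat \<Rightarrow> nat) \<Rightarrow> 'k::comm_ring_1"
  assumes hyp: "\<forall>t. 0 < t \<longrightarrow> t < D \<longrightarrow> Pt N d (t - 1) f = (\<lambda>b. - LB N d (Pt N d t f) b)"
  shows "k < D \<Longrightarrow> Pt N d (D - 1 - k) f = (\<lambda>b. (-1) ^ k * (LB N d ^^ k) (Pt N d (D - 1) f) b)"
proof (induction k)
  case 0 show ?case by simp
next
  case (Suc k)
  have e: "D - 1 - Suc k = (D - 1 - k) - 1" by simp
  have "Pt N d (D - 1 - Suc k) f = (\<lambda>b. - LB N d (Pt N d (D - 1 - k) f) b)"
  proof -
    have "0 < D - 1 - k" "D - 1 - k < D" using Suc.prems by auto
    from hyp[rule_format, OF this] show ?thesis unfolding e .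
  qed
  also have "\<dots> = (\<lambda>b. - LB N d (\<lambda>b. (-1) ^ k * (LB N d ^^ k) (Pt N d (D - 1) f) b) b)"
    using Suc by simp
  also have "\<dots> = (\<lambda>b. (-1) ^ Suc k * (LB N d ^^ Suc k) (Pt N d (D - 1) f) b)"
    by (simp add: lin_mult_smult)
  finally show ?case .
qed

lemma chain:
  fixes f :: "(nat \<Rightarrow> nat) \<Rightarrow> 'k::comm_ring_1"
  assumes hyp: "\<forall>t. 0 < t \<longrightarrow> t < d N \<longrightarrow> Pt N d (t - 1) f = (\<lambda>b. - LB N d (Pt N d t f) b)"
    and Lf: "lin_mult (Suc N) d (\<lambda>_. 1) f = u" and D: "0 < d N"
  shows "(LB N d ^^ d N) (\<lambda>b. (-1) ^ (d N - 1) * Pt N d (d N - 1) f b) = Pt N d 0 u"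
proof -
  have "Pt N d (d N - 1 - (d N - 1)) f = (\<lambda>b. (-1) ^ (d N - 1) * (LB N d ^^ (d N - 1)) (Pt N d (d N - 1) f) b)"
    using R_lemma[OF hyp, of "d N - 1"] D by simp
  hence P0: "Pt N d 0 f = (\<lambda>b. (-1) ^ (d N - 1) * (LB N d ^^ (d N - 1)) (Pt N d (d N - 1) f) b)" by simp
  have DS: "d N = Suc (d N - 1)" using D by simp
  have "(LB N d ^^ d N) (\<lambda>b. (-1) ^ (d N - 1) * Pt N d (d N - 1) f b)
      = (\<lambda>b. (-1) ^ (d N - 1) * (LB N d ^^ d N) (Pt N d (d N - 1) f) b)"
    by (rule funpow_smult)
  also have "\<dots> = (\<lambda>b. (-1) ^ (d N - 1) * LB N d ((LB N d ^^ (d N - 1)) (Pt N d (d N - 1) f)) b)"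
    by (subst DS, simp)
  also have "\<dots> = LB N d (\<lambda>b. (-1) ^ (d N - 1) * (LB N d ^^ (d N - 1)) (Pt N d (d N - 1) f) b)"
    by (simp add: lin_mult_smult)
  also have "\<dots> = LB N d (Pt N d 0 f)" by (simp only: P0)
  also have "\<dots> = Pt N d 0 u" using Lf D by (rule pt_base)
  finally show ?thesis .
qed

lemma f_zero:
  assumes "f \<in> graded_piece (Suc N) d j" "\<forall>t < d N. Pt N d t f = (\<lambda>_. 0)"
  shows "f = (\<lambda>_. 0)"
proof (rule ext, rule ccontr)
  fix m assume nz: "f m \<noteq> 0"
  with assms(1) have mb: "m \<in> box (Suc N) d" by (simp add: graded_piece_def)
  from box_drop[OF mb] have "m(N := 0) \<in> box N d" "m N < d N" by auto
  hence "Pt N d (m N) f (m(N := 0)) = f m" by (simp add: Pt_def)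
  with assms(2) \<open>m N < d N\<close> nz show False by simp
qed


definition Fc :: "nat \<Rightarrow> (nat \<Rightarrow> nat) \<Rightarrow> (nat \<Rightarrow> 'k) \<Rightarrow> ((nat \<Rightarrow> nat) \<Rightarrow> 'k::comm_ring_1) \<Rightarrow> ((nat \<Rightarrow> nat) \<Rightarrow> 'k)" where
  "Fc N d s g = (\<lambda>m. if m \<in> box (Suc N) d then s (m N) * (LB N d ^^ (d N - 1 - m N)) g (m(N := 0)) else 0)"

definition Ev :: "nat \<Rightarrow> (nat \<Rightarrow> nat) \<Rightarrow> nat \<Rightarrow> ((nat \<Rightarrow> nat) \<Rightarrow> 'k::zero) \<Rightarrow> ((nat \<Rightarrow> nat) \<Rightarrow> 'k)" where
  "Ev N d t v = (\<lambda>m. if m \<in> box (Suc N) d \<and> m N = t then v (m(N := 0)) else 0)"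

lemma gp_outside: "g \<in> graded_piece N d i \<Longrightarrow> b \<notin> box N d \<Longrightarrow> g b = 0"
  by (auto simp: graded_piece_def)

lemma funpow_outside':
  "g \<in> graded_piece N d i \<Longrightarrow> b \<notin> box N d \<Longrightarrow> (lin_mult N d c ^^ k) g b = 0"
  by (cases k) (auto simp: lin_mult_outside gp_outside)

lemma mdeg_split: "mdeg (Suc N) m = mdeg N (m(N := 0)) + m N"
  using mdeg_lift[of N "m(N := 0)" "m N"] by simp

lemma drop_lift: "b \<in> box N d \<Longrightarrow> (b(N := t))(N := 0) = b"
  using box_N0[of b N d] by (simp add: fun_upd_idem)

lemma Fc_gp:
  fixes g :: "(nat \<Rightarrow> nat) \<Rightarrow> 'k::comm_ring_1"
  assumes g: "g \<in> graded_piece N d i" and D: "0 < d N"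
  shows "Fc N d s g \<in> graded_piece (Suc N) d (i + d N - 1)"
  unfolding graded_piece_def
proof (intro CollectI allI impI)
  fix m assume nz: "Fc N d s g m \<noteq> 0"
  hence mb: "m \<in> box (Suc N) d" and nz2: "(LB N d ^^ (d N - 1 - m N)) g (m(N := 0)) \<noteq> 0"
    by (auto simp: Fc_def split: if_splits)
  have "(LB N d ^^ (d N - 1 - m N)) g \<in> graded_piece N d (i + (d N - 1 - m N))"
    using g by (rule funpow_graded)
  with nz2 have "mdeg N (m(N := 0)) = i + (d N - 1 - m N)" by (simp add: graded_piece_def)
  moreover have "m N < d N" using box_drop[OF mb] by simp
  ultimately show "m \<in> box (Suc N) d \<and> mdeg (Suc N) m = i + d N - 1"
    using mb mdeg_split[of N m] by simp
qed

lemma Pt_Fc: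
  fixes g :: "(nat \<Rightarrow> nat) \<Rightarrow> 'k::comm_ring_1"
  assumes g: "g \<in> graded_piece N d i" and t: "t < d N"
  shows "Pt N d t (Fc N d s g) = (\<lambda>b. s t * (LB N d ^^ (d N - 1 - t)) g b)"
proof (rule ext)
  fix b
  show "Pt N d t (Fc N d s g) b = s t * (LB N d ^^ (d N - 1 - t)) g b"
  proof (cases "b \<in> box N d")
    case True
    have "b(N := t) \<in> box (Suc N) d" using True t by (rule box_lift)
    thus ?thesis using True drop_lift[OF True, of t] by (simp add: Pt_def Fc_def)
  next
    case False thus ?thesis using funpow_outside'[OF g False] by (simp add: Pt_def)
  qed
qed

lemma Am_Fc:
  fixes g :: "(nat \<Rightarrow> nat) \<Rightarrow> 'k::comm_ring_1"
  assumes g: "g \<in> graded_piece N d i" and mb: "m \<in> box (Suc N) d"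
  shows "lin_mult (Suc N) d (\<lambda>_. 1) (Fc N d s g) m
    = (s (m N) + (if 0 < m N then s (m N - 1) else 0)) * (LB N d ^^ (d N - m N)) g (m(N := 0))"
proof -
  define b where "b = m(N := 0)"
  define t where "t = m N"
  have bb: "b \<in> box N d" and t: "t < d N" using box_drop[OF mb] unfolding b_def t_def by auto
  have m: "m = b(N := t)" unfolding b_def t_def by simp
  have e1: "d N - t = Suc (d N - 1 - t)" using t by simp
  have "lin_mult (Suc N) d (\<lambda>_. 1) (Fc N d s g) m
      = LB N d (Pt N d t (Fc N d s g)) b + (if 0 < t then Pt N d (t - 1) (Fc N d s g) b else 0)"
    unfolding m by (rule key[OF bb t])
  also have "LB N d (Pt N d t (Fc N d s g)) b = s t * (LB N d ^^ (d N - t)) g b"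
    unfolding Pt_Fc[OF g t] lin_mult_smult e1 by simp
  also have "(if 0 < t then Pt N d (t - 1) (Fc N d s g) b else 0)
      = (if 0 < t then s (t - 1) * (LB N d ^^ (d N - t)) g b else 0)"
  proof (cases "0 < t")
    case True
    have "t - 1 < d N" using t by simp
    moreover have "d N - 1 - (t - 1) = d N - t" using True t by simp
    ultimately show ?thesis using True Pt_Fc[OF g, of "t - 1" s] by simp
  qed simp
  finally show ?thesis unfolding b_def[symmetric] t_def[symmetric]
    by (simp add: distrib_right)
qed

lemma Ev_gp:
  assumes v: "v \<in> graded_piece N d k"
  shows "Ev N d t v \<in> graded_piece (Suc N) d (k + t)"
  unfolding graded_piece_def
proof (intro CollectI allI impI)
  fix m assume "Ev N d t v m \<noteq> 0"
  hence mb: "m \<in> box (Suc N) d" and mt: "m N = t" and nz: "v (m(N := 0)) \<noteq> 0"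
    by (auto simp: Ev_def split: if_splits)
  from nz v have "mdeg N (m(N := 0)) = k" by (simp add: graded_piece_def)
  thus "m \<in> box (Suc N) d \<and> mdeg (Suc N) m = k + t" using mb mt mdeg_split[of N m] by simp
qed

lemma Pt_Ev:
  assumes v: "v \<in> graded_piece N d k" and s: "s < d N"
  shows "Pt N d s (Ev N d t v) = (if s = t then v else (\<lambda>_. 0))"
proof (rule ext)
  fix b
  show "Pt N d s (Ev N d t v) b = (if s = t then v else (\<lambda>_. 0)) b"
  proof (cases "b \<in> box N d")
    case True
    have "b(N := s) \<in> box (Suc N) d" using True s by (rule box_lift)
    thus ?thesis using True drop_lift[OF True, of s] by (simp add: Pt_def Ev_def)
  next
    case False thus ?thesis using gp_outside[OF v False] by (simp add: Pt_def)
  qed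
qed

lemma Am_Ev:
  fixes v :: "(nat \<Rightarrow> nat) \<Rightarrow> 'k::comm_ring_1"
  assumes v: "v \<in> graded_piece N d k"
  shows "lin_mult (Suc N) d (\<lambda>_. 1) (Ev N d r v) = (\<lambda>m. Ev N d r (LB N d v) m + Ev N d (Suc r) v m)"
proof (rule ext)
  fix m
  show "lin_mult (Suc N) d (\<lambda>_. 1) (Ev N d r v) m = Ev N d r (LB N d v) m + Ev N d (Suc r) v m"
  proof (cases "m \<in> box (Suc N) d")
    case True
    define b where "b = m(N := 0)"
    define t where "t = m N"
    have bb: "b \<in> box N d" and t: "t < d N" using box_drop[OF True] unfolding b_def t_def by auto
    have m: "m = b(N := t)" unfolding b_def t_def by simp
    have "lin_mult (Suc N) d (\<lambda>_. 1) (Ev N d r v) m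
      = LB N d (Pt N d t (Ev N d r v)) b + (if 0 < t then Pt N d (t - 1) (Ev N d r v) b else 0)"
      unfolding m by (rule key[OF bb t])
    also have "\<dots> = (if t = r then LB N d v b else 0) + (if 0 < t \<and> t - 1 = r then v b else 0)"
    proof -
      have A: "LB N d (Pt N d t (Ev N d r v)) b = (if t = r then LB N d v b else 0)"
        using Pt_Ev[OF v t, of r] by (simp add: lin_mult_zero)
      have B: "(if 0 < t then Pt N d (t - 1) (Ev N d r v) b else 0) = (if 0 < t \<and> t - 1 = r then v b else 0)"
      proof (cases "0 < t")
        case True
        have "t - 1 < d N" using t by simp
        from Pt_Ev[OF v this, of r] True show ?thesis by simp
      qed simp
      show ?thesis unfolding A B ..
    qed
    also have "\<dots> = Ev N d r (LB N d v) m + Ev N d (Suc r) v m"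
      using True unfolding Ev_def b_def[symmetric] t_def[symmetric] by auto
    finally show ?thesis .
  next
    case False thus ?thesis by (simp add: lin_mult_def Ev_def)
  qed
qed


lemma B_sub_A:
  assumes "v \<in> graded_piece N d k" "0 < d N"
  shows "v \<in> graded_piece (Suc N) d k"
  unfolding graded_piece_def
proof (intro CollectI allI impI)
  fix b assume "v b \<noteq> 0"
  with assms(1) have bb: "b \<in> box N d" and "mdeg N b = k" by (auto simp: graded_piece_def)
  thus "b \<in> box (Suc N) d \<and> mdeg (Suc N) b = k" using box_sub[OF bb assms(2)] mdeg_sub[OF bb] by simp
qed

lemma dir_ab:
  assumes D: "0 < d N"
    and H: "j + 1 < d N \<or> (d N \<le> j + 1 \<and> inj_on (LB N d ^^ d N) (graded_piece N d (j + 1 - d N) :: ((nat \<Rightarrow> nat) \<Rightarrow> 'k::field) set))"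
  shows "inj_on (lin_mult (Suc N) d (\<lambda>_. 1::'k)) (graded_piece (Suc N) d j)"
proof (rule inj_kernel)
  show "(\<lambda>x. f x - g x) \<in> graded_piece (Suc N) d j" if "f \<in> graded_piece (Suc N) d j" "g \<in> graded_piece (Suc N) d j" for f g :: "(nat \<Rightarrow> nat) \<Rightarrow> 'k"
    using that by (rule gp_diff)
  show "lin_mult (Suc N) d (\<lambda>_. 1::'k) (\<lambda>x. f x - g x) = (\<lambda>x. lin_mult (Suc N) d (\<lambda>_. 1) f x - lin_mult (Suc N) d (\<lambda>_. 1) g x)" for f g
    by (rule lin_mult_diff)
  fix f :: "(nat \<Rightarrow> nat) \<Rightarrow> 'k"
  assume fG: "f \<in> graded_piece (Suc N) d j" and fk: "lin_mult (Suc N) d (\<lambda>_. 1) f = (\<lambda>_. 0)"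
  have u0: "Pt N d t (\<lambda>_. 0::'k) = (\<lambda>_. 0)" for t by (simp add: Pt_def)
  have hyp: "\<forall>t. 0 < t \<longrightarrow> t < d N \<longrightarrow> Pt N d (t - 1) f = (\<lambda>b. - LB N d (Pt N d t f) b)"
    using pt_rec[OF fk _ _ u0] by blast
  have ch: "(LB N d ^^ d N) (\<lambda>b. (-1) ^ (d N - 1) * Pt N d (d N - 1) f b) = (\<lambda>_. 0)"
    using chain[OF hyp fk D] u0 by simp
  have PD: "Pt N d (d N - 1) f = (\<lambda>_. 0)"
  proof (cases "j + 1 < d N")
    case True
    hence "j < d N - 1" by simp
    thus ?thesis using Pt_zero[OF fG] by blast
  next
    case False
    with H have inj: "inj_on (LB N d ^^ d N) (graded_piece N d (j + 1 - d N) :: ((nat \<Rightarrow> nat) \<Rightarrow> 'k) set)" and le: "d N \<le> j + 1" by auto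
    have "Pt N d (d N - 1) f \<in> graded_piece N d (j - (d N - 1))" using Pt_gp[OF fG] le by simp
    moreover have "j - (d N - 1) = j + 1 - d N" using le D by simp
    ultimately have XG: "(\<lambda>b. (-1) ^ (d N - 1) * Pt N d (d N - 1) f b) \<in> graded_piece N d (j + 1 - d N)"
      by (simp add: gp_smult)
    have "(LB N d ^^ d N) (\<lambda>b. (-1) ^ (d N - 1) * Pt N d (d N - 1) f b) = (LB N d ^^ d N) (\<lambda>_. 0)"
      using ch by (simp add: funpow_zero)
    hence X0: "(\<lambda>b. (-1) ^ (d N - 1) * Pt N d (d N - 1) f b) = (\<lambda>_. 0)"
      by (rule inj_onD[OF inj _ XG gp_zero])
    show ?thesis
    proof (rule ext)
      fix b from fun_cong[OF X0, of b] show "Pt N d (d N - 1) f b = 0" by simp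
    qed
  qed
  have "\<forall>t < d N. Pt N d t f = (\<lambda>_. 0)"
  proof (intro allI impI)
    fix t assume t: "t < d N"
    have "Pt N d (d N - 1 - (d N - 1 - t)) f = (\<lambda>b. (-1) ^ (d N - 1 - t) * (LB N d ^^ (d N - 1 - t)) (Pt N d (d N - 1) f) b)"
      using R_lemma[OF hyp, where k="d N - 1 - t"] t by linarith
    moreover have "d N - 1 - (d N - 1 - t) = t" using t by simp
    ultimately show "Pt N d t f = (\<lambda>_. 0)" unfolding PD by (simp add: funpow_zero)
  qed
  thus "f = (\<lambda>_. 0)" using f_zero[OF fG] by blast
qed

lemma dir_c:
  assumes D: "0 < d N"
    and inj: "inj_on (lin_mult (Suc N) d (\<lambda>_. 1::'k::field)) (graded_piece (Suc N) d (i + d N - 1))"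
  shows "inj_on (LB N d ^^ d N) (graded_piece N d i :: ((nat \<Rightarrow> nat) \<Rightarrow> 'k) set)"
proof (rule inj_kernel)
  show "(\<lambda>x. f x - g x) \<in> graded_piece N d i" if "f \<in> graded_piece N d i" "g \<in> graded_piece N d i" for f g :: "(nat \<Rightarrow> nat) \<Rightarrow> 'k"
    using that by (rule gp_diff)
  show "(LB N d ^^ d N) (\<lambda>x. f x - g x) = (\<lambda>x. (LB N d ^^ d N) f x - (LB N d ^^ d N) g x)" for f g :: "(nat \<Rightarrow> nat) \<Rightarrow> 'k"
    by (rule funpow_diff)
  fix g :: "(nat \<Rightarrow> nat) \<Rightarrow> 'k"
  assume gG: "g \<in> graded_piece N d i" and gk: "(LB N d ^^ d N) g = (\<lambda>_. 0)"
  define s where "s = (\<lambda>t. (-1::'k) ^ (d N - 1 - t))"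
  define F where "F = Fc N d s g"
  have FG: "F \<in> graded_piece (Suc N) d (i + d N - 1)" unfolding F_def using gG D by (rule Fc_gp)
  have "lin_mult (Suc N) d (\<lambda>_. 1) F = (\<lambda>_. 0)"
  proof (rule ext)
    fix m show "lin_mult (Suc N) d (\<lambda>_. 1) F m = 0"
    proof (cases "m \<in> box (Suc N) d")
      case True
      have mN: "m N < d N" using box_drop[OF True] by simp
      have "lin_mult (Suc N) d (\<lambda>_. 1) F m
          = (s (m N) + (if 0 < m N then s (m N - 1) else 0)) * (LB N d ^^ (d N - m N)) g (m(N := 0))"
        unfolding F_def by (rule Am_Fc[OF gG True])
      also have "\<dots> = 0"
      proof (cases "0 < m N")
        case True
        have "d N - 1 - (m N - 1) = Suc (d N - 1 - m N)" using True mN by simp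
        hence "s (m N - 1) = (-1) ^ Suc (d N - 1 - m N)" unfolding s_def by (simp only:)
        hence "s (m N - 1) = - s (m N)" unfolding s_def by simp
        thus ?thesis using True by simp
      next
        case False
        hence "m N = 0" by simp
        thus ?thesis using gk by simp
      qed
      finally show ?thesis .
    qed (simp add: lin_mult_def)
  qed
  hence "lin_mult (Suc N) d (\<lambda>_. 1) F = lin_mult (Suc N) d (\<lambda>_. 1) (\<lambda>_. 0)" by (simp add: lin_mult_zero)
  hence F0: "F = (\<lambda>_. 0)" by (rule inj_onD[OF inj _ FG gp_zero])
  have "d N - 1 < d N" using D by simp
  hence "Pt N d (d N - 1) F = (\<lambda>b. s (d N - 1) * (LB N d ^^ (d N - 1 - (d N - 1))) g b)"
    unfolding F_def by (rule Pt_Fc[OF gG])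
  hence "Pt N d (d N - 1) F = g" by (simp add: s_def)
  moreover have "Pt N d (d N - 1) F = (\<lambda>_. 0)" unfolding F0 by (simp add: Pt_def)
  ultimately show "g = (\<lambda>_. 0)" by simp
qed

lemma dir_e:
  assumes D: "0 < d N"
    and surj: "lin_mult (Suc N) d (\<lambda>_. 1::'k::field) ` graded_piece (Suc N) d (i + d N - 1) = graded_piece (Suc N) d (i + d N)"
  shows "(LB N d ^^ d N) ` (graded_piece N d i :: ((nat \<Rightarrow> nat) \<Rightarrow> 'k) set) = graded_piece N d (i + d N)"
proof
  show "(LB N d ^^ d N) ` (graded_piece N d i :: ((nat \<Rightarrow> nat) \<Rightarrow> 'k) set) \<subseteq> graded_piece N d (i + d N)"
    using funpow_graded by blast
next
  show "graded_piece N d (i + d N) \<subseteq> (LB N d ^^ d N) ` (graded_piece N d i :: ((nat \<Rightarrow> nat) \<Rightarrow> 'k) set)"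
  proof
    fix v :: "(nat \<Rightarrow> nat) \<Rightarrow> 'k" assume vG: "v \<in> graded_piece N d (i + d N)"
    have vA: "v \<in> graded_piece (Suc N) d (i + d N)" using vG D by (rule B_sub_A)
    hence "v \<in> lin_mult (Suc N) d (\<lambda>_. 1::'k) ` graded_piece (Suc N) d (i + d N - 1)" by (subst surj)
    then obtain f where fG: "f \<in> graded_piece (Suc N) d (i + d N - 1)" and fv: "lin_mult (Suc N) d (\<lambda>_. 1) f = v"
      by (auto elim!: imageE)
    have vt: "Pt N d t v = (\<lambda>_. 0)" if "0 < t" for t
    proof (rule ext)
      fix b
      show "Pt N d t v b = 0"
      proof (cases "b \<in> box N d")
        case True
        have "b(N := t) \<notin> box N d" using box_N0[of "b(N := t)" N d] that by auto
        thus ?thesis using gp_outside[OF vG] by (simp add: Pt_def)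
      qed (simp add: Pt_def)
    qed
    have v0: "Pt N d 0 v = v"
    proof (rule ext)
      fix b
      show "Pt N d 0 v b = v b"
      proof (cases "b \<in> box N d")
        case True thus ?thesis using box_N0[OF True] by (simp add: Pt_def fun_upd_idem)
      qed (simp add: Pt_def gp_outside[OF vG])
    qed
    have hyp: "\<forall>t. 0 < t \<longrightarrow> t < d N \<longrightarrow> Pt N d (t - 1) f = (\<lambda>b. - LB N d (Pt N d t f) b)"
      using pt_rec[OF fv _ _ vt] by blast
    have "(LB N d ^^ d N) (\<lambda>b. (-1) ^ (d N - 1) * Pt N d (d N - 1) f b) = v"
      using chain[OF hyp fv D] v0 by simp
    moreover have "(\<lambda>b. (-1) ^ (d N - 1) * Pt N d (d N - 1) f b) \<in> graded_piece N d i"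
    proof -
      have "Pt N d (d N - 1) f \<in> graded_piece N d (i + d N - 1 - (d N - 1))"
        using Pt_gp[OF fG] by simp
      moreover have "i + d N - 1 - (d N - 1) = i" using D by simp
      ultimately show ?thesis by (simp add: gp_smult)
    qed
    ultimately show "v \<in> (LB N d ^^ d N) ` (graded_piece N d i :: ((nat \<Rightarrow> nat) \<Rightarrow> 'k) set)"
      by (metis image_eqI)
  qed
qed


lemma dir_d:
  assumes D: "0 < d N"
    and surj: "(LB N d ^^ d N) ` (graded_piece N d i :: ((nat \<Rightarrow> nat) \<Rightarrow> 'k::field) set) = graded_piece N d (i + d N)"
  shows "lin_mult (Suc N) d (\<lambda>_. 1::'k) ` graded_piece (Suc N) d (i + d N - 1) = graded_piece (Suc N) d (i + d N)"
proof -
  define j where "j = i + d N - 1"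
  have j1: "Suc j = i + d N" using D by (simp add: j_def)
  define Im where "Im = lin_mult (Suc N) d (\<lambda>_. 1::'k) ` graded_piece (Suc N) d j"
  have im_diff: "(\<lambda>m. x m - y m) \<in> Im" if "x \<in> Im" "y \<in> Im" for x y
  proof -
    from that obtain x' y' where x': "x' \<in> graded_piece (Suc N) d j" "x = lin_mult (Suc N) d (\<lambda>_. 1) x'"
      and y': "y' \<in> graded_piece (Suc N) d j" "y = lin_mult (Suc N) d (\<lambda>_. 1) y'"
      unfolding Im_def by blast
    have "(\<lambda>m. x m - y m) = lin_mult (Suc N) d (\<lambda>_. 1) (\<lambda>m. x' m - y' m)"
      unfolding x'(2) y'(2) lin_mult_diff ..
    moreover have "(\<lambda>m. x' m - y' m) \<in> graded_piece (Suc N) d j" using x'(1) y'(1) by (rule gp_diff)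
    ultimately show ?thesis unfolding Im_def by blast
  qed
  have im_add: "(\<lambda>m. x m + y m) \<in> Im" if "x \<in> Im" "y \<in> Im" for x y
  proof -
    from that obtain x' y' where x': "x' \<in> graded_piece (Suc N) d j" "x = lin_mult (Suc N) d (\<lambda>_. 1) x'"
      and y': "y' \<in> graded_piece (Suc N) d j" "y = lin_mult (Suc N) d (\<lambda>_. 1) y'"
      unfolding Im_def by blast
    have "(\<lambda>m. x m + y m) = lin_mult (Suc N) d (\<lambda>_. 1) (\<lambda>m. x' m + y' m)"
      unfolding x'(2) y'(2) lin_mult_add ..
    moreover have "(\<lambda>m. x' m + y' m) \<in> graded_piece (Suc N) d j" using x'(1) y'(1) by (rule gp_add)
    ultimately show ?thesis unfolding Im_def by blast
  qed
  have im_zero: "(\<lambda>_. 0) \<in> Im"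
  proof -
    have "(\<lambda>_. 0) = lin_mult (Suc N) d (\<lambda>_. 1::'k) (\<lambda>_. 0)" by (simp add: lin_mult_zero)
    thus ?thesis unfolding Im_def using gp_zero by blast
  qed
  have level: "t < d N \<Longrightarrow> \<forall>v. v \<in> graded_piece N d (i + d N - t) \<longrightarrow> Ev N d t v \<in> Im" for t
  proof (induction t)
    case 0
    show ?case
    proof (intro allI impI)
      fix v :: "(nat \<Rightarrow> nat) \<Rightarrow> 'k" assume "v \<in> graded_piece N d (i + d N - 0)"
      hence "v \<in> (LB N d ^^ d N) ` (graded_piece N d i :: ((nat \<Rightarrow> nat) \<Rightarrow> 'k) set)" using surj by simp
      then obtain g where gG: "g \<in> graded_piece N d i" and gv: "v = (LB N d ^^ d N) g" by auto
      define F where "F = Fc N d (\<lambda>t. (-1::'k) ^ t) g"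
      have FG: "F \<in> graded_piece (Suc N) d j" unfolding F_def j_def using gG D by (rule Fc_gp)
      have "lin_mult (Suc N) d (\<lambda>_. 1) F = Ev N d 0 v"
      proof (rule ext)
        fix m show "lin_mult (Suc N) d (\<lambda>_. 1) F m = Ev N d 0 v m"
        proof (cases "m \<in> box (Suc N) d")
          case True
          have "lin_mult (Suc N) d (\<lambda>_. 1) F m
              = ((-1) ^ (m N) + (if 0 < m N then (-1) ^ (m N - 1) else 0)) * (LB N d ^^ (d N - m N)) g (m(N := 0))"
            unfolding F_def by (rule Am_Fc[OF gG True])
          also have "\<dots> = Ev N d 0 v m"
          proof (cases "0 < m N")
            case True
            hence "m N = Suc (m N - 1)" by simp
            hence "(-1::'k) ^ (m N) = - ((-1) ^ (m N - 1))" by (metis power_Suc mult_minus1)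
            thus ?thesis using True by (simp add: Ev_def)
          next
            case False
            hence "m N = 0" by simp
            thus ?thesis using \<open>m \<in> box (Suc N) d\<close> gv by (simp add: Ev_def)
          qed
          finally show ?thesis .
        qed (simp add: lin_mult_def Ev_def)
      qed
      thus "Ev N d 0 v \<in> Im" unfolding Im_def using FG by (metis image_eqI)
    qed
  next
    case (Suc t)
    show ?case
    proof (intro allI impI)
      fix v :: "(nat \<Rightarrow> nat) \<Rightarrow> 'k" assume vG: "v \<in> graded_piece N d (i + d N - Suc t)"
      have t: "t < d N" using Suc.prems by simp
      have e: "Suc (i + d N - Suc t) = i + d N - t" using Suc.prems by simp
      have LvG: "LB N d v \<in> graded_piece N d (i + d N - t)" using lin_mult_graded[OF vG] unfolding e .
      have I1: "Ev N d t (LB N d v) \<in> Im" using Suc.IH t LvG by blast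
      have e2: "i + d N - Suc t + t = j" using Suc.prems unfolding j_def by simp
      have EvA: "Ev N d t v \<in> graded_piece (Suc N) d j" using Ev_gp[OF vG, of t] unfolding e2 .
      hence I2: "lin_mult (Suc N) d (\<lambda>_. 1) (Ev N d t v) \<in> Im" unfolding Im_def by blast
      have "(\<lambda>m. lin_mult (Suc N) d (\<lambda>_. 1) (Ev N d t v) m - Ev N d t (LB N d v) m) \<in> Im"
        using I2 I1 by (rule im_diff)
      moreover have "(\<lambda>m. lin_mult (Suc N) d (\<lambda>_. 1) (Ev N d t v) m - Ev N d t (LB N d v) m) = Ev N d (Suc t) v"
        unfolding Am_Ev[OF vG, of t] by simp
      ultimately show "Ev N d (Suc t) v \<in> Im" by simp
    qed
  qed
  have decomp: "k \<le> d N \<Longrightarrow> \<forall>u. u \<in> graded_piece (Suc N) d (i + d N) \<longrightarrow> (\<forall>m. u m \<noteq> 0 \<longrightarrow> m N < k) \<longrightarrow> u \<in> Im" for k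
  proof (induction k)
    case 0
    show ?case
    proof (intro allI impI)
      fix u :: "(nat \<Rightarrow> nat) \<Rightarrow> 'k" assume "\<forall>m. u m \<noteq> 0 \<longrightarrow> m N < 0"
      hence "u = (\<lambda>_. 0)" by auto
      thus "u \<in> Im" using im_zero by simp
    qed
  next
    case (Suc k)
    show ?case
    proof (intro allI impI)
      fix u :: "(nat \<Rightarrow> nat) \<Rightarrow> 'k"
      assume uG: "u \<in> graded_piece (Suc N) d (i + d N)" and us: "\<forall>m. u m \<noteq> 0 \<longrightarrow> m N < Suc k"
      have k: "k < d N" using Suc.prems by simp
      define w where "w = Ev N d k (Pt N d k u)"
      have wboth: "w \<in> Im \<and> w \<in> graded_piece (Suc N) d (i + d N)"
      proof (cases "k \<le> i + d N")
        case True
        have PG: "Pt N d k u \<in> graded_piece N d (i + d N - k)" using Pt_gp[OF uG True] .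
        have "w \<in> Im" unfolding w_def using level[OF k] PG by blast
        moreover have "w \<in> graded_piece (Suc N) d (i + d N - k + k)" unfolding w_def using PG by (rule Ev_gp)
        ultimately show ?thesis using True by simp
      next
        case False
        hence P0: "Pt N d k u = (\<lambda>_. 0)" using Pt_zero[OF uG] by simp
        have "w = (\<lambda>_. 0)" unfolding w_def P0 Ev_def by simp
        thus ?thesis using im_zero gp_zero by simp
      qed
      define u' where "u' = (\<lambda>m. u m - w m)"
      have u'G: "u' \<in> graded_piece (Suc N) d (i + d N)" unfolding u'_def using uG wboth by (simp add: gp_diff)
      have u's: "\<forall>m. u' m \<noteq> 0 \<longrightarrow> m N < k"
      proof (intro allI impI)
        fix m assume nz: "u' m \<noteq> 0"
        have wm: "w m = (if m \<in> box (Suc N) d \<and> m N = k then u m else 0)"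
        proof (cases "m \<in> box (Suc N) d \<and> m N = k")
          case True
          hence "m(N := 0) \<in> box N d" using box_drop by blast
          moreover have "(m(N := 0))(N := k) = m" using True by auto
          ultimately show ?thesis using True unfolding w_def Ev_def Pt_def by simp
        qed (auto simp: w_def Ev_def)
        show "m N < k"
        proof (rule ccontr)
          assume "\<not> m N < k"
          show False
          proof (cases "m N = k")
            case True
            show False
            proof (cases "m \<in> box (Suc N) d")
              case True
              with \<open>m N = k\<close> wm nz show False by (simp add: u'_def)
            next
              case False
              hence "u m = 0" using gp_outside[OF uG] by blast
              with False wm nz show False by (simp add: u'_def)
            qed
          next
            case False
            with \<open>\<not> m N < k\<close> have "\<not> m N < Suc k" by simp
            hence "u m = 0" using us by blast
            moreover have "w m = 0" using wm False by simp
            ultimately show False using nz by (simp add: u'_def)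
          qed
        qed
      qed
      have "u' \<in> Im" using Suc.IH Suc.prems u'G u's by simp
      hence "(\<lambda>m. u' m + w m) \<in> Im" using wboth im_add by blast
      moreover have "(\<lambda>m. u' m + w m) = u" by (simp add: u'_def)
      ultimately show "u \<in> Im" by simp
    qed
  qed
  show ?thesis
  proof
    show "lin_mult (Suc N) d (\<lambda>_. 1::'k) ` graded_piece (Suc N) d (i + d N - 1) \<subseteq> graded_piece (Suc N) d (i + d N)"
    proof
      fix x assume "x \<in> lin_mult (Suc N) d (\<lambda>_. 1::'k) ` graded_piece (Suc N) d (i + d N - 1)"
      then obtain f where "f \<in> graded_piece (Suc N) d j" "x = lin_mult (Suc N) d (\<lambda>_. 1::'k) f"
        unfolding j_def by blast
      with lin_mult_graded[of f "Suc N" d j] j1 show "x \<in> graded_piece (Suc N) d (i + d N)" by simp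
    qed
  next
    show "graded_piece (Suc N) d (i + d N) \<subseteq> lin_mult (Suc N) d (\<lambda>_. 1::'k) ` graded_piece (Suc N) d (i + d N - 1)"
    proof
      fix u :: "(nat \<Rightarrow> nat) \<Rightarrow> 'k" assume uG: "u \<in> graded_piece (Suc N) d (i + d N)"
      have "\<forall>m. u m \<noteq> 0 \<longrightarrow> m N < d N"
      proof (intro allI impI)
        fix m assume "u m \<noteq> 0"
        hence "m \<in> box (Suc N) d" using uG by (simp add: graded_piece_def)
        thus "m N < d N" using box_drop by blast
      qed
      hence "u \<in> Im" using decomp[of "d N"] uG by simp
      thus "u \<in> lin_mult (Suc N) d (\<lambda>_. 1::'k) ` graded_piece (Suc N) d (i + d N - 1)"
        unfolding Im_def j_def .
    qed
  qed
qed

theorem lemma4p7: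
  fixes n :: nat and d :: "nat \<Rightarrow> nat"
  assumes "2 \<le> n" and "\<forall>i<n. 0 < d i"
  shows "has_WLP TYPE('k::field) n d \<longleftrightarrow>
    (\<forall>j. inj_on ((lin_mult (n - 1) d (\<lambda>_. 1 :: 'k)) ^^ d (n - 1)) (graded_piece (n - 1) d j)
      \<or> ((lin_mult (n - 1) d (\<lambda>_. 1 :: 'k)) ^^ d (n - 1)) ` graded_piece (n - 1) d j
          = graded_piece (n - 1) d (j + d (n - 1)))"
proof -
  obtain N where n: "n = Suc N" using assms(1) by (cases n) auto
  have D: "0 < d N" using assms(2) n by simp
  have goal: "has_WLP TYPE('k::field) (Suc N) d \<longleftrightarrow>
    (\<forall>j. inj_on ((lin_mult N d (\<lambda>_. 1 :: 'k)) ^^ d N) (graded_piece N d j)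
      \<or> ((lin_mult N d (\<lambda>_. 1 :: 'k)) ^^ d N) ` graded_piece N d j
          = graded_piece N d (j + d N))"
  proof
    assume W: "has_WLP TYPE('k::field) (Suc N) d"
    show "\<forall>j. inj_on ((lin_mult N d (\<lambda>_. 1 :: 'k)) ^^ d N) (graded_piece N d j)
      \<or> ((lin_mult N d (\<lambda>_. 1 :: 'k)) ^^ d N) ` graded_piece N d j
          = graded_piece N d (j + d N)"
    proof
      fix i
      have e: "Suc (i + d N - 1) = i + d N" using D by simp
      from wlp_to_one[OF W, of "i + d N - 1"]
      have "inj_on (lin_mult (Suc N) d (\<lambda>_. 1::'k)) (graded_piece (Suc N) d (i + d N - 1))
          \<or> lin_mult (Suc N) d (\<lambda>_. 1::'k) ` graded_piece (Suc N) d (i + d N - 1) = graded_piece (Suc N) d (i + d N)"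
        unfolding e .
      thus "inj_on ((lin_mult N d (\<lambda>_. 1 :: 'k)) ^^ d N) (graded_piece N d i)
      \<or> ((lin_mult N d (\<lambda>_. 1 :: 'k)) ^^ d N) ` graded_piece N d i = graded_piece N d (i + d N)"
        using dir_c[where N=N and d=d, OF D] dir_e[where N=N and d=d, OF D] by blast
    qed
  next
    assume R: "\<forall>j. inj_on ((lin_mult N d (\<lambda>_. 1 :: 'k)) ^^ d N) (graded_piece N d j)
      \<or> ((lin_mult N d (\<lambda>_. 1 :: 'k)) ^^ d N) ` graded_piece N d j
          = graded_piece N d (j + d N)"
    show "has_WLP TYPE('k::field) (Suc N) d"
      unfolding has_WLP_def
    proof (intro exI allI)
      fix j
      show "inj_on (lin_mult (Suc N) d (\<lambda>_. 1::'k)) (graded_piece (Suc N) d j)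
          \<or> lin_mult (Suc N) d (\<lambda>_. 1::'k) ` graded_piece (Suc N) d j = graded_piece (Suc N) d (Suc j)"
      proof (cases "j + 1 < d N")
        case True
        thus ?thesis using dir_ab[where N=N and d=d, OF D, of j] by blast
      next
        case False
        define i where "i = j + 1 - d N"
        have ej: "i + d N - 1 = j" and ej1: "i + d N = Suc j" using False D unfolding i_def by auto
        from R have "inj_on ((lin_mult N d (\<lambda>_. 1 :: 'k)) ^^ d N) (graded_piece N d i)
          \<or> ((lin_mult N d (\<lambda>_. 1 :: 'k)) ^^ d N) ` graded_piece N d i = graded_piece N d (i + d N)" by blast
        thus ?thesis
        proof
          assume inj: "inj_on ((lin_mult N d (\<lambda>_. 1 :: 'k)) ^^ d N) (graded_piece N d i)"
          have "inj_on (lin_mult (Suc N) d (\<lambda>_. 1::'k)) (graded_piece (Suc N) d j)"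
            using dir_ab[where N=N and d=d, OF D, of j] inj False unfolding i_def by simp
          thus ?thesis ..
        next
          assume surj: "((lin_mult N d (\<lambda>_. 1 :: 'k)) ^^ d N) ` graded_piece N d i = graded_piece N d (i + d N)"
          have "lin_mult (Suc N) d (\<lambda>_. 1::'k) ` graded_piece (Suc N) d (i + d N - 1) = graded_piece (Suc N) d (i + d N)"
            using dir_d[where N=N and d=d, OF D surj] .
          moreover have ej2: "Suc j - 1 = j" by simp
          ultimately show ?thesis unfolding ej1 ej2 by blast
        qed
      qed
    qed
  qed
  show ?thesis using goal n by simp
qed


end
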